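(* Let $I,J,K$ be a partition of $[m]$ and $\bm a\in\mathbb{R}^m$ with $\mathring{P}(\bm a,I,J,K)\neq\emptyset$. Then $\mathring{P}(\bm b,I,J,K)\neq\emptyset$ for every $\bm b$ in the same open face of $\delta\mathcal{A}_{\bm o}$ as $\bm a$.
   Context: Fix nonzero $\bm u_1,\dots,\bm u_m\in\mathbb{R}^n$ (repetitions and parallel vectors allowed), $U$ the $m\times n$ matrix with these rows; $U_I,\bm a_I$ denote rows/entries indexed by $I$. For a partition $I,J,K$ of $[m]$, $\mathring{P}(\bm a,I,J,K)=\{\bm x\in\mathbb{R}^n:U_I\bm x=\bm a_I,\ U_J\bm x<\bm a_J,\ U_K\bm x>\bm a_K\}$. A circuit is $C\subseteq[m]$ with $\{\bm u_i:i\in C\}$ a minimal linearly dependent indexed family; $\bm c^C$ satisfies $\sum c_i\bm u_i=\bm 0$, $c_i\ne0\iff i\in C$. The derived arrangement $\delta\mathcal{A}_{\bm o}$ consists of hyperplanes $\langle\bm c^C,\bm y\rangle=0$ in $\mathbb{R}^m$; $\bm a,\bm b$ lie in the same open face iff $\operatorname{sign}\langle\bm c^C,\bm a\rangle=\operatorname{sign}\langle\bm c^C,\bm b\rangle$ for all circuits $C$. *)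

theory Defs
  imports "HOL-Analysis.Analysis"
begin

text \<open>Vectors u_0,...,u_{m-1} in an n-dimensional Euclidean space 'a are given by
  u :: nat => 'a, indexed by {0..<m} (standing for [m]). Vectors in R^m are nat => real,
  only entries below m matter.\<close>

definition open_cell ::
  "(nat \<Rightarrow> 'a::euclidean_space) \<Rightarrow> (nat \<Rightarrow> real) \<Rightarrow> nat set \<Rightarrow> nat set \<Rightarrow> nat set \<Rightarrow> 'a set" where
  "open_cell u a I J K = {x. (\<forall>i\<in>I. u i \<bullet> x = a i) \<and> (\<forall>j\<in>J. u j \<bullet> x < a j) \<and> (\<forall>k\<in>K. u k \<bullet> x > a k)}"

text \<open>The indexed family (u_i)_{i in C} is linearly dependent (repetitions allowed).\<close>
definition indexed_dependent :: "(nat \<Rightarrow> 'a::euclidean_space) \<Rightarrow> nat set \<Rightarrow> bool" where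
  "indexed_dependent u C \<longleftrightarrow> (\<exists>c. (\<exists>i\<in>C. c i \<noteq> 0) \<and> (\<Sum>i\<in>C. c i *\<^sub>R u i) = 0)"

definition is_circuit :: "(nat \<Rightarrow> 'a::euclidean_space) \<Rightarrow> nat \<Rightarrow> nat set \<Rightarrow> bool" where
  "is_circuit u m C \<longleftrightarrow> C \<subseteq> {0..<m} \<and> indexed_dependent u C \<and>
     (\<forall>D. D \<subset> C \<longrightarrow> \<not> indexed_dependent u D)"

definition is_circuit_vector :: "(nat \<Rightarrow> 'a::euclidean_space) \<Rightarrow> nat \<Rightarrow> nat set \<Rightarrow> (nat \<Rightarrow> real) \<Rightarrow> bool" where
  "is_circuit_vector u m C c \<longleftrightarrow> (\<Sum>i<m. c i *\<^sub>R u i) = 0 \<and> (\<forall>i<m. c i \<noteq> 0 \<longleftrightarrow> i \<in> C)"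

definition same_open_face :: "(nat \<Rightarrow> 'a::euclidean_space) \<Rightarrow> nat \<Rightarrow> (nat \<Rightarrow> real) \<Rightarrow> (nat \<Rightarrow> real) \<Rightarrow> bool" where
  "same_open_face u m a b \<longleftrightarrow> (\<forall>C c. is_circuit u m C \<and> is_circuit_vector u m C c \<longrightarrow>
      sgn (\<Sum>i<m. c i * a i) = sgn (\<Sum>i<m. c i * b i))"

end

theory Submission
  imports Defs
begin

definition dep :: "(nat \<Rightarrow> 'a::euclidean_space) \<Rightarrow> nat \<Rightarrow> (nat \<Rightarrow> real) \<Rightarrow> bool" where
  "dep u m y \<longleftrightarrow> (\<Sum>i<m. y i *\<^sub>R u i) = 0"
definition sp :: "nat \<Rightarrow> (nat \<Rightarrow> real) \<Rightarrow> nat set" where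
  "sp m y = {i. i<m \<and> y i \<noteq> 0}"
definition yb :: "nat \<Rightarrow> (nat \<Rightarrow> real) \<Rightarrow> (nat \<Rightarrow> real) \<Rightarrow> real" where
  "yb m y b = (\<Sum>i<m. y i * b i)"

lemma finite_sp[simp]: "finite (sp m y)" unfolding sp_def by auto

lemma dep_comb: "dep u m y \<Longrightarrow> dep u m z \<Longrightarrow> dep u m (\<lambda>i. y i - t * z i)"
proof -
  assume a: "dep u m y" "dep u m z"
  have "(\<Sum>i<m. (y i - t * z i) *\<^sub>R u i) = (\<Sum>i<m. y i *\<^sub>R u i) - t *\<^sub>R (\<Sum>i<m. z i *\<^sub>R u i)"
    by (simp add: scaleR_diff_left sum_subtractf scaleR_sum_right)
  then show ?thesis using a unfolding dep_def by simp
qed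

lemma dep_neg: "dep u m z \<Longrightarrow> dep u m (\<lambda>i. - z i)"
  unfolding dep_def by (simp add: sum_negf)

lemma yb_comb: "yb m (\<lambda>i. y i - t * z i) b = yb m y b - t * yb m z b"
  unfolding yb_def by (simp add: algebra_simps sum_subtractf sum_distrib_left)

lemma yb_neg: "yb m (\<lambda>i. - z i) b = - yb m z b"
  unfolding yb_def by (simp add: sum_negf)

lemma sp_neg[simp]: "sp m (\<lambda>i. - z i) = sp m z"
  unfolding sp_def by auto

lemma yb_ident:
  assumes "dep u m y"
  shows "yb m y a = (\<Sum>i<m. y i * (a i - u i \<bullet> x))"
proof -
  have "(\<Sum>i<m. y i * (u i \<bullet> x)) = (\<Sum>i<m. y i *\<^sub>R u i) \<bullet> x"
    by (simp add: inner_sum_left)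
  also have "\<dots> = 0" using assms unfolding dep_def by simp
  finally show ?thesis unfolding yb_def by (simp add: algebra_simps sum_subtractf)
qed

lemma feas:
  assumes part: "I \<union> J \<union> K = {0..<m}"
    and x: "x \<in> open_cell u a I J K"
    and d: "dep u m y" and yJ: "\<forall>j\<in>J. y j \<ge> 0" and yK: "\<forall>k\<in>K. y k \<le> 0"
  shows "yb m y a \<ge> 0" and "(\<exists>j\<in>J\<union>K. y j \<noteq> 0) \<Longrightarrow> yb m y a > 0"
proof -
  have nn: "\<forall>i\<in>{..<m}. 0 \<le> y i * (a i - u i \<bullet> x)"
  proof
    fix i assume "i \<in> {..<m}"
    then have "i \<in> I \<or> i \<in> J \<or> i \<in> K" using part by auto
    then show "0 \<le> y i * (a i - u i \<bullet> x)"
    proof (elim disjE)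
      assume "i \<in> K"
      then have "y i \<le> 0" "a i - u i \<bullet> x \<le> 0" using x yK unfolding open_cell_def by auto
      then show ?thesis by (rule mult_nonpos_nonpos)
    qed (use x yJ in \<open>auto simp: open_cell_def\<close>)
  qed
  show "yb m y a \<ge> 0" unfolding yb_ident[OF d, of a x] using nn by (intro sum_nonneg) auto
  assume "\<exists>j\<in>J\<union>K. y j \<noteq> 0"
  then obtain j where j: "j \<in> J \<union> K" "y j \<noteq> 0" by auto
  have jm: "j \<in> {..<m}" using j part by auto
  have "0 < y j * (a j - u j \<bullet> x)"
  proof (cases "j \<in> J")
    case True
    then have "y j > 0" "a j - u j \<bullet> x > 0" using j x yJ unfolding open_cell_def by (auto simp: less_le)
    then show ?thesis by simp
  next
    case False
    then have "j \<in> K" using j by auto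
    then have "y j < 0" "a j - u j \<bullet> x < 0" using j x yK unfolding open_cell_def by (auto simp: less_le)
    then show ?thesis by (simp add: mult_neg_neg)
  qed
  then show "yb m y a > 0" unfolding yb_ident[OF d, of a x]
    using nn jm by (intro sum_pos2[of "{..<m}" j]) auto
qed

lemma feasI:
  assumes part: "I \<union> J \<union> K = {0..<m}" "I \<inter> J = {}" "I \<inter> K = {}"
    and x: "x \<in> open_cell u a I J K"
    and d: "dep u m y" and s: "sp m y \<subseteq> I"
  shows "yb m y a = 0"
proof -
  have z: "\<forall>i\<in>J\<union>K. y i = 0"
  proof
    fix i assume i: "i \<in> J \<union> K"
    then have "i < m" "i \<notin> I" using part by auto
    then show "y i = 0" using s unfolding sp_def by auto
  qed
  have "yb m y a \<ge> 0" using feas(1)[OF part(1) x d] z by auto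
  moreover have "yb m (\<lambda>i. - y i) a \<ge> 0" using feas(1)[OF part(1) x dep_neg[OF d]] z by auto
  ultimately show ?thesis by (simp add: yb_neg)
qed

lemma circ_or_smaller:
  assumes d: "dep u m y" and ne: "sp m y \<noteq> {}"
  shows "(is_circuit u m (sp m y) \<and> is_circuit_vector u m (sp m y) y) \<or>
         (\<exists>z. dep u m z \<and> sp m z \<noteq> {} \<and> sp m z \<subset> sp m y)"
proof (cases "\<exists>D. D \<subset> sp m y \<and> indexed_dependent u D")
  case True
  then obtain D c where D: "D \<subset> sp m y" and ci: "\<exists>i\<in>D. c i \<noteq> 0" and cs: "(\<Sum>i\<in>D. c i *\<^sub>R u i) = 0"
    unfolding indexed_dependent_def by blast
  define z where "z i = (if i \<in> D then c i else 0)" for i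
  have Dm: "D \<subseteq> {..<m}" using D unfolding sp_def by auto
  have "(\<Sum>i<m. z i *\<^sub>R u i) = (\<Sum>i\<in>D. z i *\<^sub>R u i)"
    by (rule sum.mono_neutral_right) (use Dm in \<open>auto simp: z_def\<close>)
  also have "\<dots> = 0" using cs by (simp add: z_def)
  finally have "dep u m z" unfolding dep_def .
  moreover have "sp m z \<subseteq> D" unfolding sp_def z_def by auto
  moreover have "sp m z \<noteq> {}" using ci Dm unfolding sp_def z_def by auto
  ultimately show ?thesis using D by blast
next
  case False
  have "(\<Sum>i\<in>sp m y. y i *\<^sub>R u i) = (\<Sum>i<m. y i *\<^sub>R u i)"
    by (rule sum.mono_neutral_left) (auto simp: sp_def)
  then have "indexed_dependent u (sp m y)" using d ne unfolding indexed_dependent_def dep_def sp_def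
    by auto
  then have "is_circuit u m (sp m y)" using False unfolding is_circuit_def sp_def by auto
  moreover have "is_circuit_vector u m (sp m y) y" using d unfolding is_circuit_vector_def dep_def sp_def by auto
  ultimately show ?thesis by blast
qed

lemma sgn_eq_pos: "sgn (p::real) = sgn q \<Longrightarrow> p > 0 \<Longrightarrow> q > 0"
  by (auto simp: sgn_if split: if_splits)
lemma sgn_eq_zero: "sgn (p::real) = sgn q \<Longrightarrow> p = 0 \<Longrightarrow> q = 0"
  by (auto simp: sgn_if split: if_splits)

lemma lem1:
  assumes part: "I \<union> J \<union> K = {0..<m}" "I \<inter> J = {}" "I \<inter> K = {}"
    and x: "x \<in> open_cell u a I J K"
    and face: "same_open_face u m a b"
  shows "dep u m y \<Longrightarrow> sp m y \<subseteq> I \<Longrightarrow> yb m y b = 0"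
proof (rule ccontr)
  let ?P = "\<lambda>y. dep u m y \<and> sp m y \<subseteq> I \<and> yb m y b \<noteq> 0"
  assume "dep u m y" "sp m y \<subseteq> I" "yb m y b \<noteq> 0"
  then have "?P y" by blast
  from ex_has_least_nat[of ?P y "\<lambda>y. card (sp m y)", OF this]
  obtain y where P: "?P y" and least: "\<And>y'. ?P y' \<Longrightarrow> card (sp m y) \<le> card (sp m y')" by blast
  have ne: "sp m y \<noteq> {}"
  proof
    assume "sp m y = {}"
    then have "yb m y b = 0" unfolding yb_def sp_def by (auto intro: sum.neutral)
    with P show False by blast
  qed
  from circ_or_smaller[OF _ ne] P
  consider "is_circuit u m (sp m y)" "is_circuit_vector u m (sp m y) y"
    | z where "dep u m z" "sp m z \<noteq> {}" "sp m z \<subset> sp m y" by blast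
  then show False
  proof cases
    case 1
    have "yb m y a = 0" using feasI[OF part x] P by blast
    moreover have "sgn (yb m y a) = sgn (yb m y b)"
      using face 1 unfolding same_open_face_def yb_def by blast
    ultimately have "yb m y b = 0" by (rule sgn_eq_zero[rotated])
    with P show False by blast
  next
    case 2
    then obtain i0 where i0: "i0 \<in> sp m z" by blast
    then have zi0: "z i0 \<noteq> 0" unfolding sp_def by auto
    define t where "t = y i0 / z i0"
    define w where "w i = y i - t * z i" for i
    have dw: "dep u m w" unfolding w_def using dep_comb P 2 by blast
    have spw: "sp m w \<subset> sp m y"
    proof -
      have "sp m w \<subseteq> sp m y"
        using 2(3) unfolding sp_def w_def by auto
      moreover have "i0 \<notin> sp m w" using zi0 unfolding sp_def w_def t_def by auto
      moreover have "i0 \<in> sp m y" using i0 2(3) by auto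
      ultimately show ?thesis by blast
    qed
    have ybw: "yb m w b = yb m y b - t * yb m z b" unfolding w_def by (rule yb_comb)
    show False
    proof (cases "yb m w b = 0")
      case False
      then have "?P w" using dw spw P by auto
      then have "card (sp m y) \<le> card (sp m w)" by (rule least)
      moreover have "card (sp m w) < card (sp m y)" using spw by (simp add: psubset_card_mono)
      ultimately show False by simp
    next
      case True
      then have "yb m z b \<noteq> 0" using ybw P by auto
      then have "?P z" using 2 P by auto
      then have "card (sp m y) \<le> card (sp m z)" by (rule least)
      moreover have "card (sp m z) < card (sp m y)" using 2 by (simp add: psubset_card_mono)
      ultimately show False by simp
    qed
  qed
qed

lemma lem2:
  assumes part: "I \<union> J \<union> K = {0..<m}" "I \<inter> J = {}" "I \<inter> K = {}" "J \<inter> K = {}"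
    and x: "x \<in> open_cell u a I J K"
    and face: "same_open_face u m a b"
  shows "\<not> (dep u m y \<and> (\<forall>j\<in>J. y j \<ge> 0) \<and> (\<forall>k\<in>K. y k \<le> 0) \<and> yb m y b \<le> 0 \<and> (\<exists>j\<in>J\<union>K. y j \<noteq> 0))"
proof
  let ?P = "\<lambda>y. dep u m y \<and> (\<forall>j\<in>J. y j \<ge> 0) \<and> (\<forall>k\<in>K. y k \<le> 0) \<and> yb m y b \<le> 0 \<and> (\<exists>j\<in>J\<union>K. y j \<noteq> 0)"
  assume "?P y"
  from ex_has_least_nat[of ?P y "\<lambda>y. card (sp m y)", OF this]
  obtain y where P: "?P y" and least: "\<And>y'. ?P y' \<Longrightarrow> card (sp m y) \<le> card (sp m y')" by blast
  have smaller: "\<And>w. ?P w \<Longrightarrow> sp m w \<subset> sp m y \<Longrightarrow> False"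
  proof -
    fix w assume "?P w" "sp m w \<subset> sp m y"
    then have "card (sp m y) \<le> card (sp m w)" "card (sp m w) < card (sp m y)"
      using least by (auto simp: psubset_card_mono)
    then show False by simp
  qed
  have I1: "\<And>w. dep u m w \<Longrightarrow> \<forall>j\<in>J\<union>K. w j = 0 \<Longrightarrow> yb m w b = 0"
  proof -
    fix w assume "dep u m w" "\<forall>j\<in>J\<union>K. w j = 0"
    moreover have "sp m w \<subseteq> I" using part(1) \<open>\<forall>j\<in>J\<union>K. w j = 0\<close> unfolding sp_def by auto
    ultimately show "yb m w b = 0" using lem1[OF part(1-3) x face] by blast
  qed
  have Jm: "\<And>j. j \<in> J \<union> K \<Longrightarrow> j < m" using part(1) by auto
  have ne: "sp m y \<noteq> {}" using P Jm unfolding sp_def by blast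
  have step: "\<And>z. dep u m z \<Longrightarrow> sp m z \<subset> sp m y \<Longrightarrow> yb m z b \<ge> 0 \<Longrightarrow> \<exists>i\<in>sp m z. y i * z i > 0 \<Longrightarrow> False"
  proof -
    fix z assume dz: "dep u m z" and sz: "sp m z \<subset> sp m y" and zb: "yb m z b \<ge> 0"
      and ex: "\<exists>i\<in>sp m z. y i * z i > 0"
    define Q where "Q = {i \<in> sp m z. y i * z i > 0}"
    have fQ: "finite Q" "Q \<noteq> {}" using ex unfolding Q_def by auto
    define t where "t = Min ((\<lambda>i. y i / z i) ` Q)"
    have "t \<in> (\<lambda>i. y i / z i) ` Q" unfolding t_def using fQ by (intro Min_in) auto
    then obtain i0 where i0: "i0 \<in> Q" "t = y i0 / z i0" by auto
    have tle: "\<And>i. i \<in> Q \<Longrightarrow> t \<le> y i / z i" unfolding t_def using fQ by auto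
    have ratpos: "\<And>i. i \<in> Q \<Longrightarrow> y i / z i > 0"
      unfolding Q_def by (auto simp: zero_less_mult_iff zero_less_divide_iff)
    have tpos: "t > 0" using ratpos i0 by auto
    define w where "w i = y i - t * z i" for i
    have dw: "dep u m w" unfolding w_def using dep_comb P dz by blast
    have zsub: "\<And>i. i < m \<Longrightarrow> y i = 0 \<Longrightarrow> z i = 0" using sz unfolding sp_def by auto
    have sgnpos: "\<And>i. i < m \<Longrightarrow> y i \<ge> 0 \<Longrightarrow> w i \<ge> 0"
    proof -
      fix i assume im: "i < m" and yi: "y i \<ge> 0"
      show "w i \<ge> 0"
      proof (cases "y i = 0")
        case True then show ?thesis using zsub im by (simp add: w_def)
      next
        case False
        then have yp: "y i > 0" using yi by auto
        show ?thesis
        proof (cases "z i > 0")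
          case True
          then have "i \<in> Q" using yp im unfolding Q_def sp_def by auto
          then have "t \<le> y i / z i" by (rule tle)
          then have "t * z i \<le> y i" using True by (simp add: le_divide_eq)
          then show ?thesis by (simp add: w_def)
        next
          case False
          then have "t * z i \<le> 0" using tpos by (simp add: mult_nonneg_nonpos)
          then show ?thesis using yp by (simp add: w_def)
        qed
      qed
    qed
    have sgnneg: "\<And>i. i < m \<Longrightarrow> y i \<le> 0 \<Longrightarrow> w i \<le> 0"
    proof -
      fix i assume im: "i < m" and yi: "y i \<le> 0"
      show "w i \<le> 0"
      proof (cases "y i = 0")
        case True then show ?thesis using zsub im by (simp add: w_def)
      next
        case False
        then have yp: "y i < 0" using yi by auto
        show ?thesis
        proof (cases "z i < 0")
          case True
          then have "i \<in> Q" using yp im unfolding Q_def sp_def by (auto simp: mult_neg_neg)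
          then have "t \<le> y i / z i" by (rule tle)
          then have "y i \<le> t * z i" using True by (simp add: le_divide_eq)
          then show ?thesis by (simp add: w_def)
        next
          case False
          then have "t * z i \<ge> 0" using tpos by simp
          then show ?thesis using yp by (simp add: w_def)
        qed
      qed
    qed
    have spw: "sp m w \<subset> sp m y"
    proof -
      have "sp m w \<subseteq> sp m y" using zsub unfolding sp_def w_def by auto
      moreover have "i0 \<notin> sp m w" using i0 fQ unfolding sp_def w_def Q_def by auto
      moreover have "i0 \<in> sp m y" using i0 sz unfolding Q_def by auto
      ultimately show ?thesis by blast
    qed
    have ybw: "yb m w b = yb m y b - t * yb m z b" unfolding w_def by (rule yb_comb)
    have wJ: "\<forall>j\<in>J. w j \<ge> 0" using P sgnpos Jm by auto
    have wK: "\<forall>k\<in>K. w k \<le> 0" using P sgnneg Jm by auto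
    have "t * yb m z b \<ge> 0" using tpos zb by simp
    then have wb: "yb m w b \<le> 0" using ybw P by linarith
    show False
    proof (cases "\<exists>j\<in>J\<union>K. w j \<noteq> 0")
      case True
      then show False using smaller[of w] dw wJ wK wb spw by blast
    next
      case False
      then have "yb m w b = 0" using I1 dw by blast
      then have "t * yb m z b \<le> 0" using ybw P by linarith
      then have zb0: "yb m z b \<le> 0" using tpos by (auto simp: mult_le_0_iff)
      have yz: "\<And>j. j \<in> J \<union> K \<Longrightarrow> z j = y j / t" using False tpos unfolding w_def
        by (auto simp: field_simps)
      have "?P z" using P tpos zb0 dz yz by (auto simp: divide_nonneg_pos divide_nonpos_pos)
      then show False using smaller sz by blast
    qed
  qed
  from circ_or_smaller[OF _ ne] P
  consider "is_circuit u m (sp m y)" "is_circuit_vector u m (sp m y) y"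
    | z where "dep u m z" "sp m z \<noteq> {}" "sp m z \<subset> sp m y" by blast
  then show False
  proof cases
    case 1
    have "yb m y a > 0" using feas(2)[OF part(1) x] P by blast
    moreover have "sgn (yb m y a) = sgn (yb m y b)"
      using face 1 unfolding same_open_face_def yb_def by blast
    ultimately have "yb m y b > 0" by (rule sgn_eq_pos[rotated])
    with P show False by simp
  next
    case 2
    note z = 2
    have zz: "\<And>i. i \<in> sp m z \<Longrightarrow> y i * z i \<noteq> 0" using z(3) unfolding sp_def by auto
    obtain i1 where i1: "i1 \<in> sp m z" using z by blast
    show False
    proof (cases "yb m z b \<ge> 0 \<and> (\<exists>i\<in>sp m z. y i * z i > 0)")
      case True then show False using step z by blast
    next
      case nA: False
      show False
      proof (cases "yb m z b \<le> 0 \<and> (\<exists>i\<in>sp m z. y i * z i < 0)")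
        case True
        then show False using step[of "\<lambda>i. - z i"] z dep_neg yb_neg by fastforce
      next
        case nB: False
        consider "yb m z b > 0" | "yb m z b < 0" | "yb m z b = 0" by linarith
        then show False
        proof cases
          case 1
          have allneg: "\<forall>i\<in>sp m z. y i * z i < 0"
          proof
            fix i assume i: "i \<in> sp m z"
            then have "\<not> y i * z i > 0" using nA 1 by auto
            then show "y i * z i < 0" using zz[OF i] by linarith
          qed
          have "?P (\<lambda>i. - z i)"
          proof (intro conjI)
            show "dep u m (\<lambda>i. - z i)" using z dep_neg by blast
            show "\<forall>j\<in>J. 0 \<le> - z j"
            proof
              fix j assume j: "j \<in> J"
              show "0 \<le> - z j"
              proof (cases "z j = 0")
                case False
                then have "j \<in> sp m z" using j Jm unfolding sp_def by auto
                then have "y j * z j < 0" using allneg by blast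
                moreover have "y j \<ge> 0" using P j by blast
                ultimately show ?thesis by (smt (verit) mult_nonneg_nonneg)
              qed simp
            qed
            show "\<forall>k\<in>K. - z k \<le> 0"
            proof
              fix j assume j: "j \<in> K"
              show "- z j \<le> 0"
              proof (cases "z j = 0")
                case False
                then have "j \<in> sp m z" using j Jm unfolding sp_def by auto
                then have "y j * z j < 0" using allneg by blast
                moreover have "y j \<le> 0" using P j by blast
                ultimately show ?thesis by (smt (verit) mult_nonpos_nonpos)
              qed simp
            qed
            show "yb m (\<lambda>i. - z i) b \<le> 0" using 1 by (simp add: yb_neg)
            show "\<exists>j\<in>J \<union> K. - z j \<noteq> 0"
              using I1[of z] z 1 by auto
          qed
          then show False using smaller[of "\<lambda>i. - z i"] z by simp
        next
          case 2
          have allpos: "\<forall>i\<in>sp m z. y i * z i > 0"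
          proof
            fix i assume i: "i \<in> sp m z"
            then have "\<not> y i * z i < 0" using nB 2 by auto
            then show "y i * z i > 0" using zz[OF i] by linarith
          qed
          have "?P z"
          proof (intro conjI)
            show "dep u m z" using z by blast
            show "\<forall>j\<in>J. 0 \<le> z j"
            proof
              fix j assume j: "j \<in> J"
              show "0 \<le> z j"
              proof (cases "z j = 0")
                case False
                then have "j \<in> sp m z" using j Jm unfolding sp_def by auto
                then have "y j * z j > 0" using allpos by blast
                moreover have "y j \<ge> 0" using P j by blast
                ultimately show ?thesis by (smt (verit) mult_nonneg_nonpos)
              qed simp
            qed
            show "\<forall>k\<in>K. z k \<le> 0"
            proof
              fix j assume j: "j \<in> K"
              show "z j \<le> 0"
              proof (cases "z j = 0")
                case False
                then have "j \<in> sp m z" using j Jm unfolding sp_def by auto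
                then have "y j * z j > 0" using allpos by blast
                moreover have "y j \<le> 0" using P j by blast
                ultimately show ?thesis by (smt (verit) mult_nonpos_nonneg)
              qed simp
            qed
            show "yb m z b \<le> 0" using 2 by simp
            show "\<exists>j\<in>J \<union> K. z j \<noteq> 0"
              using I1[of z] z 2 by auto
          qed
          then show False using smaller[of z] z by simp
        next
          case 3
          have "y i1 * z i1 > 0 \<or> y i1 * z i1 < 0" using zz[OF i1] by linarith
          then show False using nA nB 3 i1 by auto
        qed
      qed
    qed
  qed
qed

lemma split3:
  fixes f :: "nat \<Rightarrow> 'b::comm_monoid_add"
  assumes part: "I \<union> J \<union> K = {0..<m}" "I \<inter> J = {}" "I \<inter> K = {}" "J \<inter> K = {}"
  shows "(\<Sum>i<m. f i) = sum f I + sum f J + sum f K"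
proof -
  have fin: "finite I" "finite J" "finite K" using part(1) finite_subset[of _ "{0..<m}"] by auto
  have "{..<m} = I \<union> J \<union> K" using part(1) by auto
  then have "(\<Sum>i<m. f i) = sum f (I \<union> J \<union> K)" by simp
  also have "\<dots> = sum f (I \<union> J) + sum f K"
    by (rule sum.union_disjoint) (use fin part in auto)
  also have "sum f (I \<union> J) = sum f I + sum f J"
    by (rule sum.union_disjoint) (use fin part in auto)
  finally show ?thesis .
qed

theorem mainTheorem6:
  fixes u :: "nat \<Rightarrow> 'a::euclidean_space" and m :: nat
    and I J K :: "nat set" and a b :: "nat \<Rightarrow> real"
  assumes nonzero: "\<forall>i<m. u i \<noteq> 0"
    and partition: "I \<union> J \<union> K = {0..<m}" "I \<inter> J = {}" "I \<inter> K = {}" "J \<inter> K = {}"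
    and nonempty: "open_cell u a I J K \<noteq> {}"
    and face: "same_open_face u m a b"
  shows "open_cell u b I J K \<noteq> {}"
proof -
  obtain x where x: "x \<in> open_cell u a I J K" using nonempty by blast
  note L1 = lem1[OF partition(1-3) x face]
  note L2 = lem2[OF partition x face]
  have fin: "finite I" "finite J" "finite K" using partition(1) finite_subset[of _ "{0..<m}"] by auto
  define A where "A = insert m (J \<union> K)"
  have mA: "m \<notin> J \<union> K" using partition(1) by auto
  have finA: "finite A" unfolding A_def using fin by auto
  define h :: "nat \<Rightarrow> 'a \<times> real" where
    "h i = (if i = m then (0, -1) else if i \<in> J then (u i, - b i) else (- u i, b i))" for i
  define g :: "nat \<Rightarrow> 'a \<times> real" where "g i = (u i, - b i)" for i
  define W where "W = {\<Sum>i\<in>I. \<mu> i *\<^sub>R g i | \<mu>. True}"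
  define C where "C = {\<Sum>i\<in>A. l i *\<^sub>R h i | l. (\<forall>i\<in>A. l i \<ge> 0) \<and> sum l A = 1}"
  have Wmem: "\<And>\<mu>. (\<Sum>i\<in>I. \<mu> i *\<^sub>R g i) \<in> W" unfolding W_def by blast
  have subW: "subspace W"
  proof (rule subspaceI)
    show "0 \<in> W" using Wmem[of "\<lambda>i. 0"] by simp
  next
    fix p q assume "p \<in> W" "q \<in> W"
    then obtain \<mu>1 \<mu>2 where "p = (\<Sum>i\<in>I. \<mu>1 i *\<^sub>R g i)" "q = (\<Sum>i\<in>I. \<mu>2 i *\<^sub>R g i)"
      unfolding W_def by blast
    then have "p + q = (\<Sum>i\<in>I. (\<mu>1 i + \<mu>2 i) *\<^sub>R g i)" by (simp add: sum.distrib scaleR_add_left)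
    then show "p + q \<in> W" using Wmem by metis
  next
    fix c p assume "p \<in> W"
    then obtain \<mu>1 where "p = (\<Sum>i\<in>I. \<mu>1 i *\<^sub>R g i)" unfolding W_def by blast
    then have "c *\<^sub>R p = (\<Sum>i\<in>I. (c * \<mu>1 i) *\<^sub>R g i)" by (simp add: scaleR_sum_right)
    then show "c *\<^sub>R p \<in> W" using Wmem by metis
  qed
  have gW: "\<And>i r. i \<in> I \<Longrightarrow> r *\<^sub>R g i \<in> W"
  proof -
    fix i r assume i: "i \<in> I"
    have "(\<Sum>k\<in>I. (if k = i then r else 0) *\<^sub>R g k) = r *\<^sub>R g i"
      using i fin by (simp add: if_distrib[of "\<lambda>c. c *\<^sub>R _"] cong: if_cong)
    then show "r *\<^sub>R g i \<in> W" using Wmem by metis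
  qed
  have Cmem: "\<And>l. \<forall>i\<in>A. l i \<ge> 0 \<Longrightarrow> sum l A = 1 \<Longrightarrow> (\<Sum>i\<in>A. l i *\<^sub>R h i) \<in> C"
    unfolding C_def by blast
  have convC: "convex C"
    unfolding convex_def
  proof (intro ballI allI impI)
    fix p q and s t :: real assume "p \<in> C" "q \<in> C" and st: "0 \<le> s" "0 \<le> t" "s + t = 1"
    then obtain l1 l2 where l1: "\<forall>i\<in>A. l1 i \<ge> 0" "sum l1 A = 1" "p = (\<Sum>i\<in>A. l1 i *\<^sub>R h i)"
      and l2: "\<forall>i\<in>A. l2 i \<ge> 0" "sum l2 A = 1" "q = (\<Sum>i\<in>A. l2 i *\<^sub>R h i)"
      unfolding C_def by blast
    have "s *\<^sub>R p + t *\<^sub>R q = (\<Sum>i\<in>A. (s * l1 i + t * l2 i) *\<^sub>R h i)"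
      using l1 l2 by (simp add: scaleR_sum_right sum.distrib scaleR_add_left)
    moreover have "\<forall>i\<in>A. s * l1 i + t * l2 i \<ge> 0" using l1 l2 st by simp
    moreover have "(\<Sum>i\<in>A. s * l1 i + t * l2 i) = 1"
      using l1 l2 st by (simp add: sum.distrib sum_distrib_left[symmetric])
    ultimately show "s *\<^sub>R p + t *\<^sub>R q \<in> C" using Cmem by presburger
  qed
  have hC: "h ` A \<subseteq> C"
  proof
    fix p assume "p \<in> h ` A"
    then obtain i where i: "i \<in> A" "p = h i" by blast
    have "(\<Sum>k\<in>A. (if k = i then 1 else 0) *\<^sub>R h k) = h i"
      using i finA by (simp add: if_distrib[of "\<lambda>c. c *\<^sub>R _"] cong: if_cong)
    moreover have "(\<Sum>k\<in>A. (if k = i then 1 else 0::real)) = 1" using i finA by simp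
    moreover have "\<forall>k\<in>A. (if k = i then 1 else 0::real) \<ge> 0" by simp
    ultimately show "p \<in> C" using i Cmem[of "\<lambda>k. if k = i then 1 else 0"] by simp
  qed
  have CH: "convex hull (h ` A) \<subseteq> C" using hC convC by (rule hull_minimal)
  define S where "S = (\<Union>p\<in>W. \<Union>q\<in>convex hull (h ` A). {p + q})"
  have "closed S" unfolding S_def
    by (rule closed_compact_sums[OF closed_subspace[OF subW] finite_imp_compact_convex_hull]) (use finA in auto)
  moreover have "convex S" unfolding S_def
    by (rule convex_sums[OF subspace_imp_convex[OF subW] convex_convex_hull])
  show ?thesis
  proof (cases "0 \<in> S")
    case False
    then obtain \<alpha> \<beta> where ab: "0 < \<beta>" "\<And>p. p \<in> S \<Longrightarrow> \<alpha> \<bullet> p > \<beta>"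
      using separating_hyperplane_closed_0[OF \<open>convex S\<close> \<open>closed S\<close>] by blast
    have inS: "\<And>p i. p \<in> W \<Longrightarrow> i \<in> A \<Longrightarrow> p + h i \<in> S"
    proof -
      fix p i assume p: "p \<in> W" and i: "i \<in> A"
      have "h i \<in> convex hull (h ` A)" by (rule hull_inc) (use i in blast)
      then show "p + h i \<in> S" unfolding S_def using p by blast
    qed
    have mA': "m \<in> A" unfolding A_def by simp
    have orth: "\<And>i. i \<in> I \<Longrightarrow> \<alpha> \<bullet> g i = 0"
    proof (rule ccontr)
      fix i assume i: "i \<in> I" and c: "\<alpha> \<bullet> g i \<noteq> 0"
      define r where "r = (\<beta> - \<alpha> \<bullet> h m - 1) / (\<alpha> \<bullet> g i)"
      have "\<alpha> \<bullet> (r *\<^sub>R g i + h m) > \<beta>" using ab(2) inS[OF gW[OF i] mA'] by blast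
      moreover have "\<alpha> \<bullet> (r *\<^sub>R g i + h m) = \<beta> - 1" using c unfolding r_def
        by (simp add: inner_add_right)
      ultimately show False by simp
    qed
    obtain a1 a2 where aa: "\<alpha> = (a1, a2)" by (cases \<alpha>)
    have "\<alpha> \<bullet> h m > \<beta>" using ab(2) inS[OF subspace_0[OF subW] mA'] by simp
    then have a2: "a2 < 0" using ab(1) aa by (simp add: h_def)
    define z where "z = (1 / a2) *\<^sub>R a1"
    have "z \<in> open_cell u b I J K" unfolding open_cell_def
    proof (intro CollectI conjI ballI)
      fix i assume i: "i \<in> I"
      have "a1 \<bullet> u i = a2 * b i" using orth[OF i] aa by (simp add: g_def)
      then show "u i \<bullet> z = b i" using a2 unfolding z_def by (simp add: inner_commute)
    next
      fix j assume j: "j \<in> J"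
      then have "j \<in> A" "j \<noteq> m" unfolding A_def using mA by auto
      then have "\<alpha> \<bullet> (0 + h j) > \<beta>" using ab(2) inS[OF subspace_0[OF subW]] by blast
      then have "\<alpha> \<bullet> h j > \<beta>" by simp
      then have "a1 \<bullet> u j - a2 * b j > 0" using ab(1) aa j \<open>j \<noteq> m\<close> by (simp add: h_def)
      then have "a2 * b j < a1 \<bullet> u j" by simp
      then have "(a1 \<bullet> u j) / a2 < b j" using a2 by (simp add: divide_less_eq mult.commute)
      then show "u j \<bullet> z < b j" unfolding z_def by (simp add: inner_commute)
    next
      fix k assume k: "k \<in> K"
      then have "k \<in> A" "k \<noteq> m" "k \<notin> J" unfolding A_def using mA partition(4) by auto
      then have "\<alpha> \<bullet> (0 + h k) > \<beta>" using ab(2) inS[OF subspace_0[OF subW]] by blast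
      then have "\<alpha> \<bullet> h k > \<beta>" by simp
      then have "- (a1 \<bullet> u k) + a2 * b k > 0" using ab(1) aa \<open>k \<noteq> m\<close> \<open>k \<notin> J\<close> by (simp add: h_def)
      then have "a1 \<bullet> u k < a2 * b k" by simp
      then have "b k < (a1 \<bullet> u k) / a2" using a2 by (simp add: less_divide_eq mult.commute)
      then show "u k \<bullet> z > b k" unfolding z_def by (simp add: inner_commute)
    qed
    then show ?thesis by blast
  next
    case True
    then obtain p q where pq: "p \<in> W" "q \<in> convex hull (h ` A)" "0 = p + q" unfolding S_def by blast
    from pq(1) obtain \<mu> where mu: "p = (\<Sum>i\<in>I. \<mu> i *\<^sub>R g i)" unfolding W_def by blast
    from CH pq(2) have "q \<in> C" by blast
    then obtain l where l: "\<forall>i\<in>A. l i \<ge> 0" "sum l A = 1" and lq: "q = (\<Sum>i\<in>A. l i *\<^sub>R h i)"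
      unfolding C_def by blast
    have eq: "(\<Sum>i\<in>I. \<mu> i *\<^sub>R g i) + (\<Sum>i\<in>A. l i *\<^sub>R h i) = 0" using pq(3) mu lq by simp
    define y where "y i = (if i \<in> I then \<mu> i else if i \<in> J then l i else if i \<in> K then - l i else 0)" for i
    have sA1: "\<And>f::nat \<Rightarrow> 'a. sum f A = f m + sum f J + sum f K"
      unfolding A_def using mA fin partition(4) by (simp add: sum.union_disjoint add.assoc)
    have sA2: "\<And>f::nat \<Rightarrow> real. sum f A = f m + sum f J + sum f K"
      unfolding A_def using mA fin partition(4) by (simp add: sum.union_disjoint add.assoc)
    have yI: "\<And>f. (\<Sum>i\<in>I. y i * f i) = (\<Sum>i\<in>I. \<mu> i * f i)" by (simp add: y_def)
    have yJ: "\<And>f. (\<Sum>i\<in>J. y i * f i) = (\<Sum>i\<in>J. l i * f i)"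
      using partition(2) by (intro sum.cong) (auto simp: y_def)
    have yK: "\<And>f. (\<Sum>i\<in>K. y i * f i) = (\<Sum>i\<in>K. - l i * f i)"
      using partition(3,4) by (intro sum.cong) (auto simp: y_def)
    have yIv: "(\<Sum>i\<in>I. y i *\<^sub>R u i) = (\<Sum>i\<in>I. \<mu> i *\<^sub>R u i)" by (simp add: y_def)
    have yJv: "(\<Sum>i\<in>J. y i *\<^sub>R u i) = (\<Sum>i\<in>J. l i *\<^sub>R u i)"
      using partition(2) by (intro sum.cong) (auto simp: y_def)
    have yKv: "(\<Sum>i\<in>K. y i *\<^sub>R u i) = (\<Sum>i\<in>K. - l i *\<^sub>R u i)"
      using partition(3,4) by (intro sum.cong) (auto simp: y_def)
    have hJ: "\<And>i. i \<in> J \<Longrightarrow> h i = (u i, - b i)" using mA by (auto simp: h_def)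
    have hK: "\<And>i. i \<in> K \<Longrightarrow> h i = (- u i, b i)" using mA partition(4) by (auto simp: h_def)
    have e1: "fst ((\<Sum>i\<in>I. \<mu> i *\<^sub>R g i) + (\<Sum>i\<in>A. l i *\<^sub>R h i)) = 0" using eq by simp
    have e2: "snd ((\<Sum>i\<in>I. \<mu> i *\<^sub>R g i) + (\<Sum>i\<in>A. l i *\<^sub>R h i)) = 0" using eq by simp
    have sJ1: "(\<Sum>i\<in>J. l i *\<^sub>R fst (h i)) = (\<Sum>i\<in>J. l i *\<^sub>R u i)" using hJ by (intro sum.cong) auto
    have sK1: "(\<Sum>i\<in>K. l i *\<^sub>R fst (h i)) = (\<Sum>i\<in>K. - l i *\<^sub>R u i)" using hK by (intro sum.cong) auto
    have sJ2: "(\<Sum>i\<in>J. l i * snd (h i)) = - (\<Sum>i\<in>J. l i * b i)" using hJ by (simp add: sum_negf[symmetric])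
    have sK2: "(\<Sum>i\<in>K. l i * snd (h i)) = (\<Sum>i\<in>K. l i * b i)" using hK by (intro sum.cong) auto
    have dy: "dep u m y"
    proof -
      have "(\<Sum>i<m. y i *\<^sub>R u i) = (\<Sum>i\<in>I. \<mu> i *\<^sub>R u i) + (\<Sum>i\<in>J. l i *\<^sub>R u i) + (\<Sum>i\<in>K. - l i *\<^sub>R u i)"
        using split3[OF partition, of "\<lambda>i. y i *\<^sub>R u i"] yIv yJv yKv by simp
      also have "\<dots> = 0"
      proof -
        have f1: "fst (\<Sum>i\<in>I. \<mu> i *\<^sub>R g i) = (\<Sum>i\<in>I. \<mu> i *\<^sub>R u i)" by (simp add: fst_sum g_def)
        have "fst (\<Sum>i\<in>A. l i *\<^sub>R h i) = (\<Sum>i\<in>A. l i *\<^sub>R fst (h i))" by (simp add: fst_sum)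
        also have "\<dots> = l m *\<^sub>R fst (h m) + (\<Sum>i\<in>J. l i *\<^sub>R fst (h i)) + (\<Sum>i\<in>K. l i *\<^sub>R fst (h i))"
          by (rule sA1)
        also have "\<dots> = (\<Sum>i\<in>J. l i *\<^sub>R u i) + (\<Sum>i\<in>K. - l i *\<^sub>R u i)"
          unfolding sJ1 sK1 by (simp add: h_def)
        finally have f2: "fst (\<Sum>i\<in>A. l i *\<^sub>R h i) = (\<Sum>i\<in>J. l i *\<^sub>R u i) + (\<Sum>i\<in>K. - l i *\<^sub>R u i)" .
        show ?thesis using e1 unfolding fst_add f1 f2 by (simp add: add.assoc)
      qed
      finally show ?thesis unfolding dep_def .
    qed
    have ybv: "yb m y b = - l m"
    proof -
      have "yb m y b = (\<Sum>i\<in>I. \<mu> i * b i) + (\<Sum>i\<in>J. l i * b i) + (\<Sum>i\<in>K. - l i * b i)"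
        unfolding yb_def using split3[OF partition, of "\<lambda>i. y i * b i"] yI yJ yK by simp
      moreover have "(\<Sum>i\<in>I. \<mu> i * - b i) + (l m * -1 + (\<Sum>i\<in>J. l i * snd (h i)) + (\<Sum>i\<in>K. l i * snd (h i))) = 0"
      proof -
        have f1: "snd (\<Sum>i\<in>I. \<mu> i *\<^sub>R g i) = (\<Sum>i\<in>I. \<mu> i * - b i)" by (simp add: snd_sum g_def)
        have "snd (\<Sum>i\<in>A. l i *\<^sub>R h i) = (\<Sum>i\<in>A. l i * snd (h i))" by (simp add: snd_sum)
        also have "\<dots> = l m * snd (h m) + (\<Sum>i\<in>J. l i * snd (h i)) + (\<Sum>i\<in>K. l i * snd (h i))"
          by (rule sA2)
        also have "l m * snd (h m) = l m * -1" by (simp add: h_def)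
        finally have f2: "snd (\<Sum>i\<in>A. l i *\<^sub>R h i) = l m * -1 + (\<Sum>i\<in>J. l i * snd (h i)) + (\<Sum>i\<in>K. l i * snd (h i))" .
        show ?thesis using e2 unfolding snd_add f1 f2 .
      qed
      ultimately show ?thesis unfolding sJ2 sK2 by (simp add: sum_negf)
    qed
    show ?thesis
    proof (cases "\<exists>j\<in>J\<union>K. y j \<noteq> 0")
      case True
      have "\<forall>j\<in>J. y j \<ge> 0" using l partition(2) unfolding A_def y_def by auto
      moreover have "\<forall>k\<in>K. y k \<le> 0" using l partition(3,4) unfolding A_def y_def by auto
      moreover have "yb m y b \<le> 0" using ybv l unfolding A_def by auto
      ultimately show ?thesis using L2[of y] dy True by blast
    next
      case False
      then have "\<forall>j\<in>J\<union>K. l j = 0" using partition(2,3) unfolding y_def by (auto split: if_splits)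
      then have "l m = 1" using l(2) sA2[of l] by simp
      moreover have "sp m y \<subseteq> I" using False partition(1) unfolding sp_def by auto
      ultimately show ?thesis using L1[OF dy] ybv by simp
    qed
  qed
qed

end
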